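(* Consider the following binary deterministic control system with parameters $a'=2$, $\sigma_{v2}'=1$, $p_1'=1$. For $n\ge 0$ and $i\in\mathbb Z$: $x^{n+1}_i=x^n_{i-a'}\oplus u^n_{1,i}\oplus u^n_{2,i}\oplus w^n_i$, $y^n_{1,i}=x^n_i$, $y^n_{2,i}=x^n_i\oplus v^n_i$, with $x^0_i=0$ for all $i$. For every $n$, $w^n_i=0$ for $i\ge 0$ and $(w^n_i)_{i<0}$ are i.i.d. Bernoulli$(1/2)$ on $\{0,1\}$; $v^n_i=0$ for $i\ge\sigma_{v2}'$ and $(v^n_i)_{i<\sigma_{v2}'}$ are i.i.d. Bernoulli$(1/2)$; all the $w$'s and $v$'s (over all $n,i$) are independent. The sequence $u^n_1=(u^n_{1,i})_i$ is a function of $y^0_1,\dots,y^n_1$ and $u^n_2$ is a function of $y^0_2,\dots,y^n_2$, and the first controller satisfies $u^n_{1,i}=0$ for all $n\ge 0$ and all $i\ge p_1'$. Call $d$ an achieved distortion level if $x^n_i=0$ for all $i\ge d$ and all $n\ge 0$ with probability $1$. Then for every admissible pair of controllers, every achieved distortion level satisfies $d\ge 2$; i.e., the minimum achievable $d$ is at least $2$.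
   Context: $\oplus$ denotes addition modulo 2 (XOR). Binary sequences $(x_i)_{i\in\mathbb Z}$ model binary expansions, index $i$ being the coefficient of $2^i$; the shift $x_{i-a'}$ models multiplication by $2^{a'}$. *)

theory Defs
  imports "HOL-Probability.Probability"
begin

text \<open>Binary sequences indexed by \<open>int\<close>; bit value 1 is True, 0 is False,
  and XOR is \<open>\<noteq>\<close> on bool. Parameters fixed: a' = 2, sigma_v2' = 1, p_1' = 1.\<close>

text \<open>Sample space: one fair coin for each coordinate (False,n,i) (raw w-noise)
  and (True,n,i) (raw v-noise); all coordinates i.i.d. Bernoulli(1/2).\<close>
type_synonym noise = "bool \<times> nat \<times> int \<Rightarrow> bool"

definition noise_measure :: "noise measure" where
  "noise_measure = PiM UNIV (\<lambda>_. measure_pmf (bernoulli_pmf (1/2)))"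

definition wn :: "noise \<Rightarrow> nat \<Rightarrow> int \<Rightarrow> bool" where
  "wn \<omega> n i = (i < 0 \<and> \<omega> (False, n, i))"

definition vn :: "noise \<Rightarrow> nat \<Rightarrow> int \<Rightarrow> bool" where
  "vn \<omega> n i = (i < 1 \<and> \<omega> (True, n, i))"

text \<open>Controllers: \<open>u n hist\<close> gives the control sequence u^n from the observation
  history [y^0, ..., y^n].  \<open>xhist u1 u2 \<omega> n = [x^0, ..., x^n]\<close>.\<close>
fun xhist :: "(nat \<Rightarrow> (int \<Rightarrow> bool) list \<Rightarrow> int \<Rightarrow> bool)
    \<Rightarrow> (nat \<Rightarrow> (int \<Rightarrow> bool) list \<Rightarrow> int \<Rightarrow> bool)
    \<Rightarrow> noise \<Rightarrow> nat \<Rightarrow> (int \<Rightarrow> bool) list" where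
  "xhist u1 u2 \<omega> 0 = [(\<lambda>i. False)]"
| "xhist u1 u2 \<omega> (Suc n) =
     (let h = xhist u1 u2 \<omega> n;
          y1 = h;
          y2 = map (\<lambda>k. \<lambda>i. (h ! k) i \<noteq> vn \<omega> k i) [0..<Suc n]
      in h @ [(\<lambda>i. ((h ! n) (i - 2) \<noteq> u1 n y1 i) \<noteq> (u2 n y2 i \<noteq> wn \<omega> n i))])"

definition xstate :: "(nat \<Rightarrow> (int \<Rightarrow> bool) list \<Rightarrow> int \<Rightarrow> bool)
    \<Rightarrow> (nat \<Rightarrow> (int \<Rightarrow> bool) list \<Rightarrow> int \<Rightarrow> bool)
    \<Rightarrow> noise \<Rightarrow> nat \<Rightarrow> int \<Rightarrow> bool" where
  "xstate u1 u2 \<omega> n = xhist u1 u2 \<omega> n ! n"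

end

theory Submission
  imports Defs
begin

abbreviation "B \<equiv> measure_pmf (bernoulli_pmf (1/2))"

lemma distr_flip:
  fixes f :: "'i \<Rightarrow> bool \<Rightarrow> bool"
  assumes f: "\<And>j. map_pmf (f j) (bernoulli_pmf (1/2)) = bernoulli_pmf (1/2)"
  shows "distr (PiM UNIV (\<lambda>_::'i. B)) (PiM UNIV (\<lambda>_. B)) (\<lambda>\<omega> j. f j (\<omega> j))
       = PiM UNIV (\<lambda>_. B)" (is "distr ?P ?P ?T = ?P")
proof (rule measure_eqI_PiM_infinite[symmetric, OF refl])
  interpret prob_space ?P by (intro prob_space_PiM) (auto simp: measure_pmf.prob_space_axioms)
  show "finite_measure ?P" by unfold_locales
  have meas: "?T \<in> measurable ?P ?P"
    by (rule measurable_PiM_single') (auto simp: space_PiM)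
  show "sets (distr ?P ?P ?T) = sets ?P" by simp
  fix A J assume J: "finite J" "J \<subseteq> (UNIV::'i set)" and A: "\<And>i. i \<in> J \<Longrightarrow> A i \<in> sets B"
  have "?P (prod_emb UNIV (\<lambda>_. B) J (Pi\<^sub>E J A)) = (\<Prod>j\<in>J. B (A j))"
    using J A by (intro emeasure_PiM_emb) (auto simp: measure_pmf.prob_space_axioms)
  also have "\<dots> = (\<Prod>j\<in>J. B (f j -` A j))"
    by (intro prod.cong refl) (metis emeasure_map_pmf f)
  also have "\<dots> = ?P (prod_emb UNIV (\<lambda>_. B) J (Pi\<^sub>E J (\<lambda>j. f j -` A j)))"
    using J by (intro emeasure_PiM_emb[symmetric]) (auto simp: measure_pmf.prob_space_axioms)
  also have "prod_emb UNIV (\<lambda>_. B) J (Pi\<^sub>E J (\<lambda>j. f j -` A j)) = ?T -` prod_emb UNIV (\<lambda>_. B) J (Pi\<^sub>E J A) \<inter> space ?P"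
    by (auto simp: prod_emb_def space_PiM PiE_iff)
  also have "?P \<dots> = distr ?P ?P ?T (prod_emb UNIV (\<lambda>_. B) J (Pi\<^sub>E J A))"
    using J A meas by (intro emeasure_distr[symmetric] sets_PiM_I) auto
  finally show "?P (prod_emb UNIV (\<lambda>_. B) J (Pi\<^sub>E J A)) = distr ?P ?P ?T (prod_emb UNIV (\<lambda>_. B) J (Pi\<^sub>E J A))" .
qed

definition flipT :: "noise \<Rightarrow> noise" where
  "flipT \<omega> = (\<lambda>j. if j = (False,0,-1) \<or> j = (True,1,-1) then \<not> \<omega> j else \<omega> j)"

definition x1f :: "(nat \<Rightarrow> (int \<Rightarrow> bool) list \<Rightarrow> int \<Rightarrow> bool)
    \<Rightarrow> (nat \<Rightarrow> (int \<Rightarrow> bool) list \<Rightarrow> int \<Rightarrow> bool) \<Rightarrow> noise \<Rightarrow> int \<Rightarrow> bool" where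
  "x1f u1 u2 \<omega> = (\<lambda>i. (False \<noteq> u1 0 [\<lambda>i. False] i) \<noteq> (u2 0 [\<lambda>i. False \<noteq> vn \<omega> 0 i] i \<noteq> wn \<omega> 0 i))"

lemma xhist1: "xhist u1 u2 \<omega> 1 = [\<lambda>i. False, x1f u1 u2 \<omega>]"
  by (simp add: Let_def x1f_def numeral_eq_Suc upt_conv_Cons)

lemma xstate21:
  assumes "\<forall>n h i. i \<ge> 1 \<longrightarrow> \<not> u1 n h i"
  shows "xstate u1 u2 \<omega> 2 1 = (x1f u1 u2 \<omega> (-1) \<noteq>
     u2 1 [\<lambda>i. False \<noteq> vn \<omega> 0 i, \<lambda>i. x1f u1 u2 \<omega> i \<noteq> vn \<omega> 1 i] 1)"
  using assms
  by (simp only: xstate_def numeral_2_eq_2 xhist.simps(2)[of _ _ _ "Suc 0"] xhist1[unfolded One_nat_def] Let_def)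
     (simp add: wn_def upt_conv_Cons nth_append)

lemma flip_xstate:
  assumes "\<forall>n h i. i \<ge> 1 \<longrightarrow> \<not> u1 n h i"
  shows "xstate u1 u2 (flipT \<omega>) 2 1 = (\<not> xstate u1 u2 \<omega> 2 1)"
proof -
  have v0: "vn (flipT \<omega>) 0 = vn \<omega> 0" by (auto simp: vn_def flipT_def)
  have x1: "x1f u1 u2 (flipT \<omega>) i = (if i = -1 then \<not> x1f u1 u2 \<omega> i else x1f u1 u2 \<omega> i)" for i
    unfolding x1f_def v0 by (auto simp: wn_def flipT_def)
  have y: "(\<lambda>i. x1f u1 u2 (flipT \<omega>) i \<noteq> vn (flipT \<omega>) 1 i) = (\<lambda>i. x1f u1 u2 \<omega> i \<noteq> vn \<omega> 1 i)"
  proof (rule ext)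
    fix i show "(x1f u1 u2 (flipT \<omega>) i \<noteq> vn (flipT \<omega>) 1 i) = (x1f u1 u2 \<omega> i \<noteq> vn \<omega> 1 i)"
      unfolding x1 by (auto simp: vn_def flipT_def)
  qed
  show ?thesis unfolding xstate21[OF assms] v0 y x1[of "-1"] by simp
qed

theorem proposition1:
  fixes u1 u2 :: "nat \<Rightarrow> (int \<Rightarrow> bool) list \<Rightarrow> int \<Rightarrow> bool" and d :: int
  assumes "\<forall>n h i. i \<ge> 1 \<longrightarrow> \<not> u1 n h i"
    and "AE \<omega> in noise_measure. \<forall>n. \<forall>i\<ge>d. \<not> xstate u1 u2 \<omega> n i"
  shows "d \<ge> 2"
proof (rule ccontr)
  assume "\<not> d \<ge> 2"
  then have d: "1 \<ge> d" by simp
  have AE1: "AE \<omega> in noise_measure. \<not> xstate u1 u2 \<omega> 2 1"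
    using assms(2) by eventually_elim (use d in auto)
  have fT: "flipT = (\<lambda>\<omega> j. (if j = (False,0,-1) \<or> j = (True,1,-1) then Not else id) (\<omega> j))"
    by (auto simp: flipT_def fun_eq_iff)
  have mp: "map_pmf (if j = (False,0,-1) \<or> j = (True,1,-1) then Not else id) (bernoulli_pmf (1/2)) = bernoulli_pmf (1/2)"
    for j :: "bool \<times> nat \<times> int"
  proof (rule pmf_eqI)
    fix i :: bool
    have "{x. (\<not> x) = i} = {\<not> i}" by auto
    then show "pmf (map_pmf (if j = (False,0,-1) \<or> j = (True,1,-1) then Not else id) (bernoulli_pmf (1/2))) i = pmf (bernoulli_pmf (1/2)) i"
      by (auto simp: pmf_map vimage_def measure_pmf_single)
  qed
  have D: "distr noise_measure noise_measure flipT = noise_measure"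
    unfolding noise_measure_def fT by (rule distr_flip[OF mp])
  have meas: "flipT \<in> measurable noise_measure noise_measure"
    unfolding noise_measure_def fT
    by (rule measurable_PiM_single') (auto simp: space_PiM)
  have "AE \<omega> in distr noise_measure noise_measure flipT. \<not> xstate u1 u2 \<omega> 2 1"
    unfolding D by (rule AE1)
  then have AE2: "AE \<omega> in noise_measure. \<not> xstate u1 u2 (flipT \<omega>) 2 1"
    by (rule AE_distrD[OF meas])
  have "AE \<omega> in noise_measure. False"
    using AE1 AE2 by eventually_elim (simp add: flip_xstate[OF assms(1)])
  moreover have "prob_space noise_measure"
    unfolding noise_measure_def by (intro prob_space_PiM) (auto simp: measure_pmf.prob_space_axioms)
  ultimately show False
    using prob_space.AE_False by blast
qed

end
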